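(* Let $q=p^n$ with $p$ prime, $m\ge1$, and $r=t(q-1)+s$ with integers $t\ge0$, $0\le s\le q-2$, and $r<m(q-1)$. If $f$ is a nonzero codeword of $R_q(r,m)$ of minimal weight $(q-s)q^{m-t-1}$, then its support $S_f$ is contained in an affine subspace of $\mathbb{F}_q^m$ of codimension $t$.
   Context: $B_m^q=\mathbb{F}_q[X_1,\dots,X_m]/(X_1^q-X_1,\dots,X_m^q-X_m)$ is identified with the algebra of functions $\mathbb{F}_q^m\to\mathbb{F}_q$. For $f\in B_m^q$, $S_f=\{x : f(x)\neq0\}$ and $|f|=\mathrm{Card}(S_f)$. The degree of $P\in B_m^q$ is the total degree of its representative of degree at most $q-1$ in each variable, and $R_q(r,m)=\{P\in B_m^q:\deg P\le r\}$. The minimum weight of a nonzero codeword of $R_q(r,m)$, for $r=t(q-1)+s$, $0\le s\le q-2$, $r<m(q-1)$, is $(q-s)q^{m-t-1}$. *)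

theory Defs
  imports "HOL-Computational_Algebra.Primes" "HOL-Library.Cardinality"
begin

(* Points of F_q^m are functions 'm => 'a, with 'a a finite field (q = CARD('a))
   and 'm a finite index type (m = CARD('m)). Elements of B_m^q are functions
   ('m => 'a) => 'a. *)

definition reduced_exps :: "nat \<Rightarrow> nat \<Rightarrow> ('m::finite \<Rightarrow> nat) set" where
  "reduced_exps q r = {e. (\<forall>i. e i \<le> q - 1) \<and> (\<Sum>i\<in>UNIV. e i) \<le> r}"

definition RM :: "nat \<Rightarrow> (('m::finite \<Rightarrow> 'a::{finite,field}) \<Rightarrow> 'a) set" where
  "RM r = {f. \<exists>c :: ('m \<Rightarrow> nat) \<Rightarrow> 'a.
      \<forall>x. f x = (\<Sum>e\<in>reduced_exps (CARD('a)) r. c e * (\<Prod>i\<in>UNIV. x i ^ e i))}"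

definition support :: "(('m::finite \<Rightarrow> 'a::{finite,field}) \<Rightarrow> 'a) \<Rightarrow> ('m \<Rightarrow> 'a) set" where
  "support f = {x. f x \<noteq> 0}"

definition weight :: "(('m::finite \<Rightarrow> 'a::{finite,field}) \<Rightarrow> 'a) \<Rightarrow> nat" where
  "weight f = card (support f)"

definition affine_subspace_codim :: "nat \<Rightarrow> ('m::finite \<Rightarrow> 'a::{finite,field}) set \<Rightarrow> bool" where
  "affine_subspace_codim t A \<longleftrightarrow> t \<le> CARD('m) \<and>
     (\<exists>(a :: 'm \<Rightarrow> 'a) (v :: nat \<Rightarrow> 'm \<Rightarrow> 'a).
        (\<forall>c :: nat \<Rightarrow> 'a. (\<forall>i. (\<Sum>j<CARD('m) - t. c j * v j i) = 0)
              \<longrightarrow> (\<forall>j<CARD('m) - t. c j = 0)) \<and>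
        A = {x. \<exists>c :: nat \<Rightarrow> 'a. x = (\<lambda>i. a i + (\<Sum>j<CARD('m) - t. c j * v j i))})"

end

theory Submission
  imports Defs "HOL-Computational_Algebra.Polynomial"
begin

lemma card_field_ge2: "2 \<le> CARD('a::{finite,field})"
proof -
  have "{0::'a, 1} \<subseteq> UNIV" by simp
  hence "card {0::'a,1} \<le> CARD('a)" by (intro card_mono) auto
  thus ?thesis by simp
qed

lemma fermat_field: "(y::'a::{finite,field}) ^ CARD('a) = y"
proof (cases "y = 0")
  case True
  have "CARD('a) > 0" using card_field_ge2[where 'a='a] by simp
  thus ?thesis using True by simp
next
  case False
  let ?U = "UNIV - {0::'a}"
  have "prod (\<lambda>z. y * z) ?U = prod id ?U"
    by (rule prod.reindex_bij_witness[of _ "\<lambda>z. inverse y * z" "\<lambda>z. y*z"]) (use False in auto)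
  moreover have "prod (\<lambda>z. y * z) ?U = y ^ card ?U * prod id ?U"
    by (simp add: prod.distrib)
  moreover have "prod id ?U \<noteq> 0" by simp
  ultimately have "y ^ card ?U = 1" by simp
  moreover have "card ?U = CARD('a) - 1" by (simp add: card_Diff_singleton)
  ultimately have "y ^ (CARD('a) - 1) = 1" by simp
  moreover have "CARD('a) = Suc (CARD('a) - 1)" using card_field_ge2[where 'a='a] by simp
  ultimately show ?thesis by (metis mult.right_neutral power_Suc)
qed

definition red :: "nat \<Rightarrow> nat \<Rightarrow> nat" where
  "red q j = (if j = 0 then 0 else Suc ((j - 1) mod (q - 1)))"

lemma red_Suc: "red q (Suc j) = Suc (j mod (q - 1))"
  by (simp add: red_def)

lemma red_0[simp]: "red q 0 = 0"
  by (simp add: red_def)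

lemma red_le: "red q j \<le> j"
proof (cases j)
  case (Suc j')
  have "j' mod (q - 1) \<le> j'" by (rule mod_less_eq_dividend)
  thus ?thesis using Suc by (simp add: red_Suc)
qed simp

lemma red_less: "2 \<le> q \<Longrightarrow> red q j < q"
proof (cases j)
  case (Suc j')
  assume q: "2 \<le> q"
  have "j' mod (q - 1) < q - 1" using q by (intro mod_less_divisor) simp
  moreover have "red q j = Suc (j' mod (q - 1))" using Suc by (simp add: red_Suc)
  ultimately show ?thesis using q by linarith
qed simp

lemma pow_red: "(y::'a::{finite,field}) ^ j = y ^ red CARD('a) j"
proof (induction j rule: less_induct)
  case (less j)
  let ?q = "CARD('a)"
  have q2: "2 \<le> ?q" by (rule card_field_ge2)
  show ?case
  proof (cases "j < ?q")
    case True
    show ?thesis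
    proof (cases j)
      case (Suc j')
      hence "j' < ?q - 1" using True by linarith
      thus ?thesis using Suc by (simp add: red_Suc)
    qed simp
  next
    case False
    hence lt: "j - (?q - 1) < j" using q2 by auto
    hence IH: "y ^ (j - (?q - 1)) = y ^ red ?q (j - (?q - 1))" using less by blast
    have "y ^ j = y ^ (j - ?q) * y ^ ?q" using False by (simp add: power_add[symmetric])
    also have "\<dots> = y ^ Suc (j - ?q)" by (simp add: fermat_field)
    also have "Suc (j - ?q) = j - (?q - 1)" using False q2 by linarith
    finally have 1: "y ^ j = y ^ (j - (?q - 1))" .
    obtain j' where j': "j = Suc j'" using False q2 by (cases j) auto
    obtain i' where i': "j - (?q - 1) = Suc i'" using False q2 by (cases "j - (?q - 1)") auto
    have "j' = i' + (?q - 1)" using j' i' False q2 by linarith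
    hence "j' mod (?q - 1) = i' mod (?q - 1)" by (simp only: mod_add_self2)
    hence "red ?q (j - (?q - 1)) = red ?q j" using j' i' by (simp add: red_Suc)
    thus ?thesis using 1 IH by simp
  qed
qed

definition PP :: "nat \<Rightarrow> (nat \<Rightarrow> 'a::zero) set" where
  "PP k = {x. \<forall>i\<ge>k. x i = 0}"

inductive rm :: "nat \<Rightarrow> nat \<Rightarrow> ((nat \<Rightarrow> 'a::comm_ring_1) \<Rightarrow> 'a) \<Rightarrow> bool" for k :: nat where
  rm_const: "rm k r (\<lambda>_. c)"
| rm_var: "i < k \<Longrightarrow> 1 \<le> r \<Longrightarrow> rm k r (\<lambda>x. x i)"
| rm_add: "rm k r f \<Longrightarrow> rm k r g \<Longrightarrow> rm k r (\<lambda>x. f x + g x)"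
| rm_mul: "rm k a f \<Longrightarrow> rm k b g \<Longrightarrow> a + b \<le> r \<Longrightarrow> rm k r (\<lambda>x. f x * g x)"

lemma rm_mono: "rm k a f \<Longrightarrow> a \<le> b \<Longrightarrow> rm k b f"
  using rm_mul[OF rm_const[of k 0 1], of a f b] by simp

lemma rm_local: "rm k r f \<Longrightarrow> (\<forall>i<k. x i = y i) \<Longrightarrow> f x = f y"
  by (induction rule: rm.induct) auto

lemma rm_sum: "(\<forall>e\<in>A. rm k r (g e)) \<Longrightarrow> rm k r (\<lambda>x. \<Sum>e\<in>A. g e x)"
proof (cases "finite A")
  case True
  assume "\<forall>e\<in>A. rm k r (g e)"
  with True show ?thesis
  proof (induction A rule: finite_induct)
    case empty
    then show ?case using rm_const[of k r 0] by simp
  next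
    case (insert e A)
    then show ?case by (simp add: rm_add)
  qed
next
  case False
  then show ?thesis using rm_const[of k r 0] by simp
qed

lemma rm_sum_list: "(\<forall>p\<in>set L. rm k r (g p)) \<Longrightarrow> rm k r (\<lambda>x. sum_list (map (\<lambda>p. g p x) L))"
proof (induction L)
  case Nil
  then show ?case using rm_const[of k r 0] by simp
next
  case (Cons a L)
  then show ?case by (simp add: rm_add)
qed

lemma rm_prod: "finite A \<Longrightarrow> (\<forall>e\<in>A. rm k (d e) (g e)) \<Longrightarrow> rm k (\<Sum>e\<in>A. d e) (\<lambda>x. \<Prod>e\<in>A. g e x)"
proof (induction A rule: finite_induct)
  case empty
  then show ?case using rm_const[of k 0 1] by simp
next
  case (insert e A)
  then show ?case by (auto intro: rm_mul)
qed

lemma rm_pow: "i < k \<Longrightarrow> rm k n (\<lambda>x. x i ^ n)"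
proof (induction n)
  case 0
  then show ?case using rm_const[of k 0 1] by simp
next
  case (Suc n)
  then show ?case using rm_mul[OF rm_var[of i k 1] Suc.IH, of "Suc n"] by simp
qed

lemma rm_comp: "rm k r f \<Longrightarrow> (\<forall>i<k. rm k' 1 (\<lambda>y. \<phi> y i)) \<Longrightarrow> rm k' r (\<lambda>y. f (\<phi> y))"
proof (induction rule: rm.induct)
  case (rm_const r c)
  show ?case by (rule rm.rm_const)
next
  case (rm_var i r)
  then show ?case using rm_mono by blast
next
  case (rm_add r f g)
  then show ?case by (auto intro: rm.rm_add)
next
  case (rm_mul a f b g r)
  then show ?case by (auto intro: rm.rm_mul)
qed

lemma sl_mult: "sum_list (map F xs) * sum_list (map G ys) =
   sum_list (map (\<lambda>p. sum_list (map (\<lambda>q. F p * G q) ys)) xs)"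
  for F :: "'b \<Rightarrow> 'a::comm_ring_1"
  by (induction xs) (auto simp: distrib_right sum_list_const_mult)

lemma sl_concat: "sum_list (map h (concat (map g xs))) = sum_list (map (\<lambda>p. sum_list (map h (g p))) xs)"
  for h :: "'b \<Rightarrow> 'a::comm_ring_1"
  by (induction xs) auto

lemma sl_sum: "sum_list (map (\<lambda>p. \<Sum>n\<in>A. h p n) L) = (\<Sum>n\<in>A. sum_list (map (\<lambda>p. h p n) L))"
  for h :: "'b \<Rightarrow> 'c \<Rightarrow> 'a::comm_ring_1"
  by (induction L) (auto simp: sum.distrib)

lemma rm_listdec:
  fixes f :: "(nat \<Rightarrow> 'a::comm_ring_1) \<Rightarrow> 'a"
  assumes "rm (Suc k) r f"
  shows "\<exists>L. (\<forall>p\<in>set L. fst p \<le> r \<and> rm k (r - fst p) (snd p)) \<and>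
             (\<forall>x. f x = sum_list (map (\<lambda>p. snd p x * x k ^ fst p) L))"
  using assms
proof (induction rule: rm.induct)
  case (rm_const r c)
  show ?case by (rule exI[of _ "[(0, \<lambda>_. c)]"]) (auto intro: rm.rm_const)
next
  case (rm_var i r)
  show ?case
  proof (cases "i = k")
    case True
    show ?thesis by (rule exI[of _ "[(1, \<lambda>_. 1)]"]) (use rm_var True in \<open>auto intro: rm.rm_const\<close>)
  next
    case False
    show ?thesis by (rule exI[of _ "[(0, \<lambda>x. x i)]"]) (use rm_var False in \<open>auto intro: rm.rm_var\<close>)
  qed
next
  case (rm_add r f g)
  then obtain L1 L2 where L1: "(\<forall>p\<in>set L1. fst p \<le> r \<and> rm k (r - fst p) (snd p)) \<and>
             (\<forall>x. f x = sum_list (map (\<lambda>p. snd p x * x k ^ fst p) L1))"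
    and L2: "(\<forall>p\<in>set L2. fst p \<le> r \<and> rm k (r - fst p) (snd p)) \<and>
             (\<forall>x. g x = sum_list (map (\<lambda>p. snd p x * x k ^ fst p) L2))" by blast
  show ?case by (rule exI[of _ "L1 @ L2"]) (use L1 L2 in auto)
next
  case (rm_mul a f b g r)
  then obtain L1 L2 where L1: "(\<forall>p\<in>set L1. fst p \<le> a \<and> rm k (a - fst p) (snd p)) \<and>
             (\<forall>x. f x = sum_list (map (\<lambda>p. snd p x * x k ^ fst p) L1))"
    and L2: "(\<forall>p\<in>set L2. fst p \<le> b \<and> rm k (b - fst p) (snd p)) \<and>
             (\<forall>x. g x = sum_list (map (\<lambda>p. snd p x * x k ^ fst p) L2))" by blast
  let ?L = "concat (map (\<lambda>p. map (\<lambda>q. (fst p + fst q, \<lambda>x. snd p x * snd q x)) L2) L1)"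
  show ?case
  proof (rule exI[of _ ?L], intro conjI allI)
    show "\<forall>u\<in>set ?L. fst u \<le> r \<and> rm k (r - fst u) (snd u)"
    proof
    fix u assume "u \<in> set ?L"
    then obtain p q where p: "p \<in> set L1" and q: "q \<in> set L2"
      and u: "u = (fst p + fst q, \<lambda>x. snd p x * snd q x)" by auto
    have "fst p \<le> a" "fst q \<le> b" "rm k (a - fst p) (snd p)" "rm k (b - fst q) (snd q)"
      using p q L1 L2 by auto
    moreover have "(a - fst p) + (b - fst q) \<le> r - (fst p + fst q)" using rm_mul(3) calculation by linarith
    ultimately show "fst u \<le> r \<and> rm k (r - fst u) (snd u)" using u rm_mul(3)
      by (auto intro: rm.rm_mul)
    qed
  next
    fix x :: "nat \<Rightarrow> 'a"
    have "f x * g x = sum_list (map (\<lambda>p. snd p x * x k ^ fst p) L1) * sum_list (map (\<lambda>p. snd p x * x k ^ fst p) L2)"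
      using L1 L2 by simp
    also have "\<dots> = sum_list (map (\<lambda>p. snd p x * x k ^ fst p) ?L)"
      unfolding sl_mult sl_concat by (simp add: o_def power_add ac_simps)
    finally show "f x * g x = sum_list (map (\<lambda>p. snd p x * x k ^ fst p) ?L)" .
  qed
qed

lemma sum_delta_mult: "j < N \<Longrightarrow> (\<Sum>n<N. (if j = n then v else 0) * w n) = v * w j"
  for v :: "'a::comm_ring_1" and N :: nat
proof -
  assume j: "j < N"
  have "(\<Sum>n<N. (if j = n then v else 0) * w n) = (\<Sum>n<N. if j = n then v * w n else 0)"
    by (rule sum.cong) auto
  also have "\<dots> = v * w j" using j by (subst sum.delta') auto
  finally show ?thesis .
qed

lemma rm_dec:
  fixes f :: "(nat \<Rightarrow> 'a::{finite,field}) \<Rightarrow> 'a"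
  assumes "rm (Suc k) r f"
  shows "\<exists>G. (\<forall>n. rm k (r - n) (G n)) \<and> (\<forall>n. r < n \<longrightarrow> G n = (\<lambda>_. 0)) \<and>
             (\<forall>x. f x = (\<Sum>n<CARD('a). G n x * x k ^ n))"
proof -
  let ?q = "CARD('a)"
  obtain L where L1: "\<forall>p\<in>set L. fst p \<le> r \<and> rm k (r - fst p) (snd p)"
    and L2: "\<forall>x. f x = sum_list (map (\<lambda>p. snd p x * x k ^ fst p) L)"
    using rm_listdec[OF assms] by blast
  define G where "G n = (\<lambda>x. sum_list (map (\<lambda>p. if red ?q (fst p) = n then snd p x else 0) L))" for n
  have "rm k (r - n) (G n)" for n
    unfolding G_def
  proof (rule rm_sum_list, intro ballI)
    fix p assume p: "p \<in> set L"
    show "rm k (r - n) (\<lambda>x. if red ?q (fst p) = n then snd p x else 0)"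
    proof (cases "red ?q (fst p) = n")
      case True
      hence "n \<le> fst p" using red_le[of ?q "fst p"] by simp
      hence "rm k (r - n) (snd p)" using L1 p rm_mono[of k "r - fst p" "snd p" "r - n"] by auto
      thus ?thesis using True by simp
    next
      case False
      thus ?thesis using rm_const[of k "r - n" 0] by simp
    qed
  qed
  moreover have "G n = (\<lambda>_. 0)" if "r < n" for n
  proof -
    have *: "red ?q (fst p) \<noteq> n" if "p \<in> set L" for p
      using red_le[of ?q "fst p"] L1 that \<open>r < n\<close> by fastforce
    have "(\<Sum>p\<leftarrow>L. if red ?q (fst p) = n then snd p x else 0) = (\<Sum>p\<leftarrow>L. 0)" for x
      by (rule arg_cong[where f=sum_list], rule map_cong) (use * in auto)
    thus ?thesis unfolding G_def by (intro ext) simp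
  qed
  moreover have "f x = (\<Sum>n<?q. G n x * x k ^ n)" for x
  proof -
    have q2: "2 \<le> ?q" by (rule card_field_ge2)
    have "f x = sum_list (map (\<lambda>p. snd p x * x k ^ red ?q (fst p)) L)"
      using L2 pow_red[of "x k"] by simp
    also have "\<dots> = sum_list (map (\<lambda>p. \<Sum>n<?q. (if red ?q (fst p) = n then snd p x else 0) * x k ^ n) L)"
      by (rule arg_cong[where f=sum_list], rule map_cong) (simp_all add: sum_delta_mult red_less[OF q2])
    also have "\<dots> = (\<Sum>n<?q. G n x * x k ^ n)"
      unfolding sl_sum G_def by (simp add: sum_list_mult_const)
    finally show ?thesis .
  qed
  ultimately show ?thesis by blast
qed

definition wt :: "nat \<Rightarrow> ((nat \<Rightarrow> 'a::zero) \<Rightarrow> 'a) \<Rightarrow> nat" where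
  "wt k f = card {x \<in> PP k. f x \<noteq> 0}"

lemma PP_0: "PP 0 = {\<lambda>_. 0}"
  by (auto simp: PP_def)

lemma PP_Suc: "PP (Suc k) = (\<lambda>(x::nat\<Rightarrow>'a::zero,y). x(k:=y)) ` (PP k \<times> UNIV)"
proof (rule equalityI)
  show "(\<lambda>(x::nat\<Rightarrow>'a::zero,y). x(k:=y)) ` (PP k \<times> UNIV) \<subseteq> PP (Suc k)"
    by (auto simp: PP_def)
next
  show "PP (Suc k) \<subseteq> (\<lambda>(x::nat\<Rightarrow>'a::zero,y). x(k:=y)) ` (PP k \<times> UNIV)"
  proof
    fix z :: "nat \<Rightarrow> 'a" assume z: "z \<in> PP (Suc k)"
    have "z = (\<lambda>(x,y). x(k:=y)) (z(k:=0), z k)" by auto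
    moreover have "(z(k:=0), z k) \<in> PP k \<times> UNIV" using z by (auto simp: PP_def)
    ultimately show "z \<in> (\<lambda>(x,y). x(k:=y)) ` (PP k \<times> UNIV)" by blast
  qed
qed

lemma inj_PP_Suc: "inj_on (\<lambda>(x::nat\<Rightarrow>'a::zero,y). x(k:=y)) (PP k \<times> UNIV)"
proof (rule inj_onI, clarify)
  fix x y x' y' assume x: "x \<in> PP k" and x': "x' \<in> PP k" and eq: "x(k := y) = x'(k := y')"
  have "y = y'" using fun_cong[OF eq, of k] by simp
  moreover have "x = x'"
  proof
    fix i show "x i = x' i"
    proof (cases "i = k")
      case True thus ?thesis using x x' by (simp add: PP_def)
    next
      case False thus ?thesis using fun_cong[OF eq, of i] by simp
    qed
  qed
  ultimately show "x = x' \<and> y = y'" by simp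
qed

lemma PP_Suc_mem: "x \<in> PP k \<Longrightarrow> x(k:=y) \<in> PP (Suc k)"
  by (auto simp: PP_def)

lemma PP_mono: "x \<in> PP k \<Longrightarrow> x \<in> PP (Suc k)"
  by (auto simp: PP_def)

lemma finite_PP: "finite (PP k :: (nat \<Rightarrow> 'a::{finite,zero}) set)"
proof (induction k)
  case 0 thus ?case by (simp add: PP_0)
next
  case (Suc k) thus ?case by (simp add: PP_Suc)
qed

lemma card_PP: "card (PP k :: (nat \<Rightarrow> 'a::{finite,zero}) set) = CARD('a) ^ k"
proof (induction k)
  case 0 thus ?case by (simp add: PP_0)
next
  case (Suc k)
  have "card (PP (Suc k) :: (nat \<Rightarrow> 'a) set) = card ((PP k :: (nat \<Rightarrow> 'a) set) \<times> (UNIV :: 'a set))"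
    unfolding PP_Suc using inj_PP_Suc by (rule card_image)
  also have "\<dots> = CARD('a) ^ Suc k" using Suc by (simp add: card_cartesian_product)
  finally show ?case .
qed

definition fib :: "((nat \<Rightarrow> 'a::zero) \<Rightarrow> 'a) \<Rightarrow> nat \<Rightarrow> (nat \<Rightarrow> 'a) \<Rightarrow> nat" where
  "fib f k x = card {y. f (x(k:=y)) \<noteq> 0}"

lemma wt_Suc: "wt (Suc k) (f :: (nat \<Rightarrow> 'a::{finite,zero}) \<Rightarrow> 'a) = (\<Sum>x\<in>PP k. fib f k x)"
proof -
  let ?h = "\<lambda>(x,y). x(k:=y)"
  let ?S = "Sigma (PP k) (\<lambda>x. {y. f (x(k:=y)) \<noteq> 0})"
  have "{z \<in> PP (Suc k). f z \<noteq> 0} = ?h ` ?S"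
    unfolding PP_Suc by auto
  moreover have "inj_on ?h ?S" by (rule inj_on_subset[OF inj_PP_Suc]) auto
  ultimately have "wt (Suc k) f = card ?S" unfolding wt_def by (simp add: card_image)
  also have "\<dots> = (\<Sum>x\<in>PP k. fib f k x)" unfolding fib_def
    by (rule card_SigmaI) (auto simp: finite_PP)
  finally show ?thesis .
qed

lemma fiber_bound:
  fixes c :: "nat \<Rightarrow> 'a::{finite,field}"
  assumes d: "d < CARD('a)" and cd: "c d \<noteq> 0" and cz: "\<forall>n. d < n \<longrightarrow> c n = 0"
  shows "CARD('a) - d \<le> card {y::'a. (\<Sum>n<CARD('a). c n * y^n) \<noteq> 0}"
proof -
  define p where "p = (\<Sum>n\<le>d. monom (c n) n)"
  have ev: "(\<Sum>n<CARD('a). c n * y^n) = poly p y" for y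
  proof -
    have "(\<Sum>n<CARD('a). c n * y^n) = (\<Sum>n\<le>d. c n * y^n)"
      by (rule sum.mono_neutral_right) (use d cz in auto)
    thus ?thesis unfolding p_def by (simp add: poly_sum poly_monom)
  qed
  have "coeff p d = c d" unfolding p_def by (simp add: coeff_sum)
  hence p0: "p \<noteq> 0" using cd by auto
  have "degree p \<le> d"
    by (rule degree_le) (auto simp: p_def coeff_sum)
  hence roots: "card {y. poly p y = 0} \<le> d" using card_poly_roots_bound[OF p0] by simp
  have "{y. poly p y \<noteq> 0} = UNIV - {y. poly p y = 0}" by auto
  hence "card {y. poly p y \<noteq> 0} = CARD('a) - card {y. poly p y = 0}"
    by (simp add: card_Diff_subset)
  thus ?thesis using roots ev by simp
qed

definition mw :: "nat \<Rightarrow> nat \<Rightarrow> nat \<Rightarrow> nat" where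
  "mw q k r = (if k * (q - 1) \<le> r then 1 else (q - r mod (q - 1)) * q ^ (k - r div (q - 1) - 1))"

lemma mw_ts:
  assumes q: "2 \<le> q" and s: "s < q - 1"
  shows "mw q k (t * (q - 1) + s) = (if k \<le> t then 1 else (q - s) * q ^ (k - t - 1))"
proof -
  have "k * (q - 1) \<le> t * (q - 1) + s \<longleftrightarrow> k \<le> t"
  proof
    assume "k \<le> t" thus "k * (q - 1) \<le> t * (q - 1) + s" by (simp add: trans_le_add1)
  next
    assume h: "k * (q - 1) \<le> t * (q - 1) + s"
    show "k \<le> t"
    proof (rule ccontr)
      assume "\<not> k \<le> t"
      hence "Suc t * (q - 1) \<le> k * (q - 1)" by (intro mult_le_mono1) simp
      thus False using h s by simp
    qed
  qed
  moreover have "(t * (q - 1) + s) mod (q - 1) = s" using s by simp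
  moreover have "(t * (q - 1) + s) div (q - 1) = t" using s by simp
  ultimately show ?thesis unfolding mw_def by simp
qed

lemma mw_pos: "2 \<le> q \<Longrightarrow> 1 \<le> mw q k r"
proof -
  assume q: "2 \<le> q"
  have "r mod (q - 1) < q - 1" using q by (intro mod_less_divisor) simp
  hence "1 \<le> q - r mod (q - 1)" by simp
  moreover have "1 \<le> q ^ (k - r div (q - 1) - 1)" using q by simp
  ultimately show ?thesis unfolding mw_def using one_le_mult_iff by auto
qed

lemma ar1: "d \<le> s \<Longrightarrow> s < q \<Longrightarrow> (q - s) * q \<le> (q - d) * (q - (s - d))" for d s q :: nat
proof -
  assume a: "d \<le> s" "s < q"
  define e where "e = s - d"
  define f where "f = q - s"
  have e: "s = d + e" and f: "q = s + f" using a unfolding e_def f_def by auto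
  have "(q - s) * q = f * (d + e + f)" using e f by simp
  also have "\<dots> \<le> (e + f) * (f + d)" by (simp add: algebra_simps)
  also have "(e + f) * (f + d) = (q - d) * (q - (s - d))" using e f by simp
  finally show ?thesis .
qed

lemma ar2: "s < d \<Longrightarrow> d < q \<Longrightarrow> q - s \<le> (q - d) * (q - (q - 1 + s - d))" for d s q :: nat
proof -
  assume a: "s < d" "d < q"
  define e where "e = d - s - 1"
  define g where "g = q - d - 1"
  have e: "d = s + e + 1" and g: "q = d + g + 1" using a unfolding e_def g_def by auto
  have "q - s = e + g + 2" using e g by simp
  also have "\<dots> \<le> (g + 1) * (e + 2)" by (simp add: algebra_simps)
  also have "(g + 1) * (e + 2) = (q - d) * (q - (q - 1 + s - d))" using e g by simp
  finally show ?thesis .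
qed

lemma ar2s: "s < d \<Longrightarrow> d + 2 \<le> q \<Longrightarrow> q - s < (q - d) * (q - (q - 1 + s - d))" for d s q :: nat
proof -
  assume a: "s < d" "d + 2 \<le> q"
  define e where "e = d - s - 1"
  define g where "g = q - d - 2"
  have e: "d = s + e + 1" and g: "q = d + g + 2" using a unfolding e_def g_def by auto
  have "q - s = e + g + 3" using e g by simp
  also have "\<dots> < (g + 2) * (e + 2)" by (simp add: algebra_simps)
  also have "(g + 2) * (e + 2) = (q - d) * (q - (q - 1 + s - d))" using e g by simp
  finally show ?thesis .
qed

lemma mw_step:
  fixes q d r k :: nat
  assumes q: "2 \<le> q" and d: "d < q" and dr: "d \<le> r"
  shows "mw q (Suc k) r \<le> (q - d) * mw q k (r - d)"
proof -
  define t where "t = r div (q-1)"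
  define s where "s = r mod (q-1)"
  have s: "s < q - 1" using q unfolding s_def by (intro mod_less_divisor) simp
  have r: "r = t*(q-1) + s" unfolding t_def s_def using div_mult_mod_eq[of r "q-1"] by linarith
  have mw1: "mw q (Suc k) r = (if Suc k \<le> t then 1 else (q-s) * q^(k-t))"
    using mw_ts[OF q s, of "Suc k" t] r by simp
  show ?thesis
  proof (cases "d \<le> s")
    case True
    have r': "r - d = t*(q-1) + (s-d)" using r True by simp
    have s': "s - d < q - 1" using s by simp
    have mw2: "mw q k (r-d) = (if k \<le> t then 1 else (q - (s-d)) * q^(k-t-1))"
      using mw_ts[OF q s', of k t] r' by simp
    consider "Suc k \<le> t" | "k = t" | "t < k" by linarith
    then show ?thesis
    proof cases
      case 1 then show ?thesis using mw1 mw2 d by simp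
    next
      case 2 then show ?thesis using mw1 mw2 d True by simp
    next
      case 3
      have "mw q (Suc k) r = (q - s) * q * q^(k-t-1)"
        using mw1 3 by (simp add: power_Suc[symmetric] Suc_diff_Suc)
      also have "\<dots> \<le> (q - d) * (q - (s - d)) * q^(k-t-1)"
        using ar1[OF True, of q] s by (intro mult_le_mono1) simp
      also have "\<dots> = (q - d) * mw q k (r - d)" using mw2 3 by simp
      finally show ?thesis .
    qed
  next
    case False
    have t1: "1 \<le> t"
    proof (rule ccontr)
      assume "\<not> 1 \<le> t" hence "t = 0" by simp
      thus False using r False dr by simp
    qed
    have tt: "t*(q-1) = (t-1)*(q-1) + (q-1)" using t1
      by (metis Suc_diff_1 add.commute less_le_trans mult_Suc zero_less_one)
    have r': "r - d = (t-1)*(q-1) + (q-1+s-d)" using r tt d False by linarith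
    have s': "q-1+s-d < q-1" using False d by simp
    have mw2: "mw q k (r-d) = (if k \<le> t-1 then 1 else (q - (q-1+s-d)) * q^(k-(t-1)-1))"
      using mw_ts[OF q s', of k "t-1"] r' by simp
    show ?thesis
    proof (cases "Suc k \<le> t")
      case True
      have "1 \<le> mw q k (r - d)" by (rule mw_pos[OF q])
      moreover have "1 \<le> q - d" using d by simp
      ultimately have "1 \<le> (q - d) * mw q k (r - d)" by (simp add: one_le_mult_iff)
      thus ?thesis using mw1 True by simp
    next
      case False2: False
      have e: "k - (t-1) - 1 = k - t" using t1 by simp
      have nk: "\<not> k \<le> t - 1" using False2 t1 by linarith
      have "mw q (Suc k) r = (q-s) * q^(k-t)" using mw1 False2 by simp
      also have "\<dots> \<le> (q - d) * (q - (q - 1 + s - d)) * q^(k-t)"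
        using ar2[of s d q] False d by (intro mult_le_mono1) simp
      also have "\<dots> = (q - d) * mw q k (r - d)" using mw2 nk e by simp
      finally show ?thesis .
    qed
  qed
qed

lemma mw_step_strict:
  fixes q d r k :: nat
  assumes q: "2 \<le> q" and d: "d + 2 \<le> q" and dr: "d \<le> r" and sd: "r mod (q-1) < d"
    and rk: "r < Suc k * (q - 1)"
  shows "mw q (Suc k) r < (q - d) * mw q k (r - d)"
proof -
  define t where "t = r div (q-1)"
  define s where "s = r mod (q-1)"
  have s: "s < q - 1" using q unfolding s_def by (intro mod_less_divisor) simp
  have r: "r = t*(q-1) + s" unfolding t_def s_def using div_mult_mod_eq[of r "q-1"] by linarith
  have False: "s < d" using sd s_def by simp
  have tk: "t \<le> k"
  proof (rule ccontr)
    assume "\<not> t \<le> k"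
    hence "Suc k * (q-1) \<le> t * (q-1)" by (intro mult_le_mono1) simp
    thus False using r rk by simp
  qed
  have mw1: "mw q (Suc k) r = (q-s) * q^(k-t)"
    using mw_ts[OF q s, of "Suc k" t] r tk by simp
  have t1: "1 \<le> t"
  proof (rule ccontr)
    assume "\<not> 1 \<le> t" hence "t = 0" by simp
    thus False using r False dr by simp
  qed
  have tt: "t*(q-1) = (t-1)*(q-1) + (q-1)" using t1
    by (metis Suc_diff_1 add.commute less_le_trans mult_Suc zero_less_one)
  have r': "r - d = (t-1)*(q-1) + (q-1+s-d)" using r tt d False by linarith
  have s': "q-1+s-d < q-1" using False d by simp
  have e: "k - (t-1) - 1 = k - t" using t1 by simp
  have nk: "\<not> k \<le> t - 1" using tk t1 by linarith
  have mw2: "mw q k (r-d) = (q - (q-1+s-d)) * q^(k-t)"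
    using mw_ts[OF q s', of k "t-1"] r' nk e by simp
  have "mw q (Suc k) r < (q - d) * (q - (q - 1 + s - d)) * q^(k-t)"
    unfolding mw1 using ar2s[OF False d] q by (intro mult_less_mono1) simp_all
  also have "\<dots> = (q - d) * mw q k (r - d)" using mw2 by simp
  finally show ?thesis .
qed

lemma dec_data:
  fixes f :: "(nat \<Rightarrow> 'a::{finite,field}) \<Rightarrow> 'a"
  assumes rmf: "rm (Suc k) r f" and x0: "x0 \<in> PP (Suc k)" and fx0: "f x0 \<noteq> 0"
  shows "\<exists>d g. d < CARD('a) \<and> d \<le> r \<and> rm k (r - d) g \<and> (\<exists>x\<in>PP k. g x \<noteq> 0) \<and>
           (\<forall>x\<in>PP k. g x \<noteq> 0 \<longrightarrow> CARD('a) - d \<le> fib f k x)"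
proof -
  let ?q = "CARD('a)"
  obtain G where G1: "\<forall>n. rm k (r - n) (G n)" and G2: "\<forall>n. r < n \<longrightarrow> G n = (\<lambda>_. 0)"
    and G3: "\<forall>x. f x = (\<Sum>n<?q. G n x * x k ^ n)"
    using rm_dec[OF rmf] by blast
  have loc: "G n (x(k:=y)) = G n x" for n x y
    by (rule rm_local[OF G1[rule_format, of n]]) auto
  define D where "D = {n. n < ?q \<and> (\<exists>x\<in>PP k. G n x \<noteq> 0)}"
  have finD: "finite D" unfolding D_def by simp
  have "D \<noteq> {}"
  proof -
    have "(\<Sum>n<?q. G n x0 * x0 k ^ n) \<noteq> 0" using G3 fx0 by simp
    then obtain n where n: "n < ?q" "G n x0 * x0 k ^ n \<noteq> 0"
      by (meson lessThan_iff sum.neutral)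
    have "x0(k:=0) \<in> PP k" using x0 by (auto simp: PP_def)
    moreover have "G n (x0(k:=0)) = G n x0" using loc[of n x0 0 ] by (simp add: loc)
    ultimately show ?thesis using n unfolding D_def by force
  qed
  define d where "d = Max D"
  have dD: "d \<in> D" unfolding d_def using finD \<open>D \<noteq> {}\<close> by (rule Max_in)
  have dmax: "n \<in> D \<Longrightarrow> n \<le> d" for n unfolding d_def using finD by simp
  have dq: "d < ?q" using dD unfolding D_def by simp
  obtain x1 where x1: "x1 \<in> PP k" "G d x1 \<noteq> 0" using dD unfolding D_def by blast
  have dr: "d \<le> r"
  proof (rule ccontr)
    assume "\<not> d \<le> r" hence "G d = (\<lambda>_. 0)" using G2 by simp
    thus False using x1 by simp
  qed
  have fibb: "?q - d \<le> fib f k x" if x: "x \<in> PP k" "G d x \<noteq> 0" for x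
  proof -
    define c where "c n = (if n < ?q then G n x else 0)" for n
    have "c d \<noteq> 0" using x dq unfolding c_def by simp
    moreover have "\<forall>n. d < n \<longrightarrow> c n = 0"
    proof (intro allI impI)
      fix n assume "d < n"
      hence "n \<notin> D" using dmax by force
      thus "c n = 0" using x unfolding c_def D_def by auto
    qed
    ultimately have "?q - d \<le> card {y::'a. (\<Sum>n<?q. c n * y^n) \<noteq> 0}"
      using fiber_bound[OF dq] by blast
    also have "{y::'a. (\<Sum>n<?q. c n * y^n) \<noteq> 0} = {y. f (x(k:=y)) \<noteq> 0}"
      using G3 by (simp add: c_def loc)
    finally show ?thesis unfolding fib_def .
  qed
  show ?thesis
    by (rule exI[of _ d], rule exI[of _ "G d"]) (use dq dr G1 x1 fibb in blast)
qed

lemma chain_bound: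
  fixes f :: "(nat \<Rightarrow> 'a::{finite,field}) \<Rightarrow> 'a"
  assumes "\<forall>x\<in>PP k. g x \<noteq> 0 \<longrightarrow> CARD('a) - d \<le> fib f k x"
  shows "(CARD('a) - d) * wt k g \<le> (\<Sum>x\<in>{x\<in>PP k. g x \<noteq> 0}. fib f k x)"
proof -
  have "(CARD('a) - d) * wt k g = (\<Sum>x\<in>{x\<in>PP k. g x \<noteq> 0}. CARD('a) - d)"
    unfolding wt_def by simp
  also have "\<dots> \<le> (\<Sum>x\<in>{x\<in>PP k. g x \<noteq> 0}. fib f k x)"
    by (rule sum_mono) (use assms in auto)
  finally show ?thesis .
qed

lemma wt_split:
  fixes f :: "(nat \<Rightarrow> 'a::{finite,field}) \<Rightarrow> 'a"
  shows "wt (Suc k) f = (\<Sum>x\<in>{x\<in>PP k. g x \<noteq> 0}. fib f k x) + (\<Sum>x\<in>{x\<in>PP k. g x = 0}. fib f k x)"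
proof -
  have "wt (Suc k) f = (\<Sum>x\<in>PP k. fib f k x)" by (rule wt_Suc)
  also have "PP k = {x\<in>PP k. g x \<noteq> 0} \<union> {x\<in>PP k. g x = 0}" by auto
  also have "(\<Sum>x\<in>{x\<in>PP k. g x \<noteq> 0} \<union> {x\<in>PP k. g x = 0}. fib f k x) =
     (\<Sum>x\<in>{x\<in>PP k. g x \<noteq> 0}. fib f k x) + (\<Sum>x\<in>{x\<in>PP k. g x = 0}. fib f k x)"
    by (rule sum.union_disjoint) (auto intro: finite_subset[OF _ finite_PP])
  finally show ?thesis .
qed

lemma W:
  fixes f :: "(nat \<Rightarrow> 'a::{finite,field}) \<Rightarrow> 'a"
  shows "rm k r f \<Longrightarrow> x0 \<in> PP k \<Longrightarrow> f x0 \<noteq> 0 \<Longrightarrow> mw CARD('a) k r \<le> wt k f"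
proof (induction k arbitrary: r f x0)
  case 0
  have "{x \<in> PP 0. f x \<noteq> 0} = PP 0" using 0 by (auto simp: PP_0)
  hence "wt 0 f = 1" unfolding wt_def by (simp add: PP_0)
  thus ?case unfolding mw_def by simp
next
  case (Suc k)
  let ?q = "CARD('a)"
  obtain d g where d: "d < ?q" "d \<le> r" and g: "rm k (r - d) g" and x1: "\<exists>x\<in>PP k. g x \<noteq> 0"
    and fb: "\<forall>x\<in>PP k. g x \<noteq> 0 \<longrightarrow> ?q - d \<le> fib f k x"
    using dec_data[OF Suc.prems] by blast
  have "mw ?q (Suc k) r \<le> (?q - d) * mw ?q k (r - d)"
    by (rule mw_step[OF card_field_ge2 d])
  also have "\<dots> \<le> (?q - d) * wt k g" using Suc.IH[OF g] x1 by (auto intro: mult_le_mono2)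
  also have "\<dots> \<le> (\<Sum>x\<in>{x\<in>PP k. g x \<noteq> 0}. fib f k x)" by (rule chain_bound[OF fb])
  also have "\<dots> \<le> wt (Suc k) f" using wt_split[of k f g] by simp
  finally show ?case .
qed

definition indep :: "nat \<Rightarrow> (nat \<Rightarrow> nat \<Rightarrow> 'a::comm_ring_1) \<Rightarrow> bool" where
  "indep n v \<longleftrightarrow> (\<forall>c. (\<forall>i. (\<Sum>j<n. c j * v j i) = 0) \<longrightarrow> (\<forall>j<n. c j = 0))"

definition aff :: "(nat \<Rightarrow> 'a::comm_ring_1) \<Rightarrow> (nat \<Rightarrow> nat \<Rightarrow> 'a) \<Rightarrow> nat \<Rightarrow> (nat \<Rightarrow> 'a) set" where
  "aff a v n = {x. \<exists>c. x = (\<lambda>i. a i + (\<Sum>j<n. c j * v j i))}"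

definition sw :: "nat \<Rightarrow> nat \<Rightarrow> nat \<Rightarrow> nat" where
  "sw i k n = (if n = i then k else if n = k then i else n)"

definition Mop :: "nat \<Rightarrow> nat \<Rightarrow> (nat \<Rightarrow> 'a::comm_ring_1) \<Rightarrow> (nat \<Rightarrow> 'a) \<Rightarrow> nat \<Rightarrow> 'a" where
  "Mop i k u y = (\<lambda>n. y (sw i k n) + y k * (u n - (if n = i then 1 else 0)))"

lemma sw_sw: "sw i k (sw i k n) = n"
  by (auto simp: sw_def)

lemma Mop_lin: "Mop i k u (\<lambda>n. b n + (\<Sum>j<N. c j * v j n)) m = Mop i k u b m + (\<Sum>j<N. c j * Mop i k u (v j) m)"
  for N :: nat
proof -
  have "\<And>W. b (sw i k m) + (\<Sum>j<N. c j * v j (sw i k m)) + (b k + (\<Sum>j<N. c j * v j k)) * W =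
     (b (sw i k m) + b k * W) + (\<Sum>j<N. c j * (v j (sw i k m) + v j k * W))"
    by (simp add: sum.distrib sum_distrib_right sum_distrib_left algebra_simps)
  thus ?thesis unfolding Mop_def by simp
qed

lemma Mop_lin0: "Mop i k u (\<lambda>n. (\<Sum>j<N. c j * v j n)) m = (\<Sum>j<N. c j * Mop i k u (v j) m)"
  for N :: nat
  using Mop_lin[where b="\<lambda>_. 0" and N=N and c=c and v=v and m=m and i=i and k=k and u=u] by (simp add: Mop_def)

lemma Mop_diff: "Mop i k u (\<lambda>n. y n - z n) m = Mop i k u y m - Mop i k u z m"
  by (simp add: Mop_def algebra_simps)

lemma Mop_zero:
  fixes u :: "nat \<Rightarrow> 'a::field"
  assumes ui: "u i \<noteq> 0" and z: "\<forall>n. Mop i k u y n = 0"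
  shows "y n = 0"
proof -
  have "Mop i k u y i = y k * u i" by (simp add: Mop_def sw_def algebra_simps)
  hence yk: "y k = 0" using z ui by simp
  have "Mop i k u y (sw i k n) = y n" using yk by (simp add: Mop_def sw_sw)
  thus ?thesis using z by simp
qed

lemma Mop_PP:
  assumes "y \<in> PP K" "u \<in> PP K" "i < K" "k < K"
  shows "Mop i k u y \<in> PP K"
  using assms by (auto simp: Mop_def PP_def sw_def)

lemma Mop_ek: "Mop i k u (\<lambda>n. if n = k then 1 else 0) = u"
  by (auto simp: Mop_def sw_def)

lemma Mop_0: "Mop i k u (\<lambda>_. 0) = (\<lambda>_. 0)"
  by (auto simp: Mop_def)

lemma rm_Mop:
  assumes "n < K" "i < K" "k < K"
  shows "rm K 1 (\<lambda>y. a n + Mop i k u y n)"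
proof -
  have s: "sw i k n < K" using assms by (auto simp: sw_def)
  have "rm K 1 (\<lambda>y. (\<lambda>_. a n) y + ((\<lambda>y. y (sw i k n)) y + (\<lambda>y. (\<lambda>y. y k) y * (\<lambda>_. u n - (if n = i then 1 else 0)) y) y))"
    by (intro rm_add rm_const rm_var[OF s] rm_mul[of K 1 _ 0] rm_var[OF assms(3)]) simp_all
  thus ?thesis by (simp add: Mop_def)
qed

lemma lift_aff:
  fixes g :: "(nat \<Rightarrow> 'a::{finite,field}) \<Rightarrow> 'a" and f :: "(nat \<Rightarrow> 'a) \<Rightarrow> 'a"
  assumes a: "a \<in> PP k" and v: "\<forall>j. v j \<in> PP k" and ind: "indep n v"
    and sub: "{x\<in>PP k. g x \<noteq> 0} \<subseteq> aff a v n"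
    and fib0: "\<forall>x\<in>PP k. g x = 0 \<longrightarrow> fib f k x = 0"
  shows "\<exists>v'. (\<forall>j. v' j \<in> PP (Suc k)) \<and> indep (Suc n) v' \<and> {x\<in>PP (Suc k). f x \<noteq> 0} \<subseteq> aff a v' (Suc n)"
proof -
  define ek where "ek = (\<lambda>i::nat. if i = k then (1::'a) else 0)"
  define v' where "v' = v(n := ek)"
  have v'P: "\<forall>j. v' j \<in> PP (Suc k)" using v unfolding v'_def ek_def by (auto simp: PP_def)
  have vk: "v j k = 0" for j using v by (auto simp: PP_def)
  have ak: "a k = 0" using a by (auto simp: PP_def)
  have sumv': "(\<Sum>j<Suc n. c j * v' j i) = (\<Sum>j<n. c j * v j i) + c n * ek i" for c i
  proof -
    have "(\<Sum>j<n. c j * v' j i) = (\<Sum>j<n. c j * v j i)" unfolding v'_def by (rule sum.cong) auto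
    thus ?thesis unfolding v'_def by simp
  qed
  have "indep (Suc n) v'"
    unfolding indep_def
  proof (intro allI impI)
    fix c :: "nat \<Rightarrow> 'a" and j assume h: "\<forall>i. (\<Sum>j<Suc n. c j * v' j i) = 0" and j: "j < Suc n"
    have cn: "c n = 0" using h[rule_format, of k] unfolding sumv' by (simp add: vk ek_def)
    have "\<forall>i. (\<Sum>j<n. c j * v j i) = 0" using h cn unfolding sumv' by simp
    hence "\<forall>j<n. c j = 0" using ind unfolding indep_def by blast
    thus "c j = 0" using j cn by (cases "j = n") auto
  qed
  moreover have "{x\<in>PP (Suc k). f x \<noteq> 0} \<subseteq> aff a v' (Suc n)"
  proof
    fix x assume x: "x \<in> {x\<in>PP (Suc k). f x \<noteq> 0}"
    define x' where "x' = x(k:=0)"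
    have x'P: "x' \<in> PP k" using x unfolding x'_def by (auto simp: PP_def)
    have xx: "x'(k := x k) = x" unfolding x'_def by simp
    have "fib f k x' \<noteq> 0"
    proof -
      have "x k \<in> {y. f (x'(k:=y)) \<noteq> 0}" using x xx by simp
      hence "{y. f (x'(k:=y)) \<noteq> 0} \<noteq> {}" by blast
      thus ?thesis unfolding fib_def by (simp add: card_gt_0_iff)
    qed
    hence "g x' \<noteq> 0" using fib0 x'P by auto
    hence "x' \<in> aff a v n" using sub x'P by blast
    then obtain c where c: "x' = (\<lambda>i. a i + (\<Sum>j<n. c j * v j i))" unfolding aff_def by blast
    have "x = (\<lambda>i. a i + (\<Sum>j<Suc n. (c(n := x k)) j * v' j i))"
    proof
      fix i
      have "(\<Sum>j<n. (c(n := x k)) j * v j i) = (\<Sum>j<n. c j * v j i)" by (rule sum.cong) auto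
      hence e: "(\<Sum>j<Suc n. (c(n := x k)) j * v' j i) = (\<Sum>j<n. c j * v j i) + x k * ek i"
        unfolding sumv' by simp
      show "x i = a i + (\<Sum>j<Suc n. (c(n := x k)) j * v' j i)"
      proof (cases "i = k")
        case True
        have "x' k = 0" unfolding x'_def by simp
        hence "a k + (\<Sum>j<n. c j * v j k) = 0" using fun_cong[OF c, of k] by simp
        thus ?thesis using True e by (simp add: ek_def ak vk)
      next
        case False
        have "x i = x' i" unfolding x'_def using False by simp
        thus ?thesis using c e False by (simp add: ek_def)
      qed
    qed
    thus "x \<in> aff a v' (Suc n)" unfolding aff_def by blast
  qed
  ultimately show ?thesis using v'P by blast
qed

lemma phi_props:
  fixes u a :: "nat \<Rightarrow> 'a::{finite,field}"
  assumes a: "a \<in> PP K" and u: "u \<in> PP K" and i: "i < K" and k: "k < K" and ui: "u i \<noteq> 0"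
  defines "\<phi> \<equiv> (\<lambda>y n. a n + Mop i k u y n)"
  shows "inj_on \<phi> (PP K)" and "\<phi> ` PP K = PP K"
proof -
  show inj: "inj_on \<phi> (PP K)"
  proof (rule inj_onI)
    fix y z assume "\<phi> y = \<phi> z"
    hence "\<forall>n. Mop i k u (\<lambda>n. y n - z n) n = 0" unfolding \<phi>_def Mop_diff
      by (metis add_left_cancel diff_self)
    hence "y n - z n = 0" for n by (rule Mop_zero[where u=u and i=i, OF ui])
    thus "y = z" by auto
  qed
  have "\<phi> ` PP K \<subseteq> PP K"
  proof
    fix x assume "x \<in> \<phi> ` PP K"
    then obtain y where y: "y \<in> PP K" "x = \<phi> y" by blast
    have "Mop i k u y \<in> PP K" by (rule Mop_PP[OF y(1) u i k])
    thus "x \<in> PP K" using a y unfolding \<phi>_def by (auto simp: PP_def)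
  qed
  thus "\<phi> ` PP K = PP K" using inj by (intro endo_inj_surj) (auto simp: finite_PP)
qed

lemma transfer_phi:
  fixes f :: "(nat \<Rightarrow> 'a::{finite,field}) \<Rightarrow> 'a" and u a :: "nat \<Rightarrow> 'a"
  assumes a: "a \<in> PP K" and u: "u \<in> PP K" and i: "i < K" and k: "k < K" and ui: "u i \<noteq> 0"
    and a': "a' \<in> PP K" and v: "\<forall>j. v j \<in> PP K" and ind: "indep N v"
    and sub: "{y\<in>PP K. f (\<lambda>n. a n + Mop i k u y n) \<noteq> 0} \<subseteq> aff a' v N"
  shows "\<exists>a'' v''. a'' \<in> PP K \<and> (\<forall>j. v'' j \<in> PP K) \<and> indep N v'' \<and> {x\<in>PP K. f x \<noteq> 0} \<subseteq> aff a'' v'' N"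
proof -
  let ?\<phi> = "\<lambda>y n. a n + Mop i k u y n"
  have img: "?\<phi> ` PP K = PP K" using phi_props[OF a u i k ui] by simp
  define a'' where "a'' = ?\<phi> a'"
  define v'' where "v'' j = Mop i k u (v j)" for j
  have "a'' \<in> PP K" unfolding a''_def using img a' by blast
  moreover have "\<forall>j. v'' j \<in> PP K" unfolding v''_def using Mop_PP[OF _ u i k] v by blast
  moreover have "indep N v''"
    unfolding indep_def
  proof (intro allI impI)
    fix c :: "nat \<Rightarrow> 'a" and j assume h: "\<forall>n. (\<Sum>j<N. c j * v'' j n) = 0" and j: "j < N"
    have "\<forall>n. Mop i k u (\<lambda>n. (\<Sum>j<N. c j * v j n)) n = 0"
      using h unfolding Mop_lin0 v''_def by simp
    hence "(\<Sum>j<N. c j * v j n) = 0" for n by (rule Mop_zero[where u=u and i=i, OF ui])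
    thus "c j = 0" using ind j unfolding indep_def by blast
  qed
  moreover have "{x\<in>PP K. f x \<noteq> 0} \<subseteq> aff a'' v'' N"
  proof
    fix x assume x: "x \<in> {x\<in>PP K. f x \<noteq> 0}"
    then obtain y where y: "y \<in> PP K" "x = ?\<phi> y" using img by (metis (no_types, lifting) imageE mem_Collect_eq)
    hence "y \<in> aff a' v N" using sub x by auto
    then obtain c where c: "y = (\<lambda>i. a' i + (\<Sum>j<N. c j * v j i))" unfolding aff_def by blast
    have "x = (\<lambda>n. a'' n + (\<Sum>j<N. c j * v'' j n))"
      unfolding y(2) c a''_def v''_def Mop_lin by (simp add: add.assoc)
    thus "x \<in> aff a'' v'' N" unfolding aff_def by blast
  qed
  ultimately show ?thesis by blast
qed

lemma two_elems:
  assumes "finite S" "2 \<le> card S"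
  obtains a b where "a \<in> S" "b \<in> S" "a \<noteq> b"
proof -
  have "S \<noteq> {}" using assms by auto
  then obtain a where a: "a \<in> S" by blast
  have "card (S - {a}) \<ge> 1" using assms a by (simp add: card_Diff_singleton)
  hence "S - {a} \<noteq> {}" by (intro notI) simp
  then obtain b where "b \<in> S - {a}" by blast
  thus ?thesis using a that by blast
qed

theorem T:
  fixes f :: "(nat \<Rightarrow> 'a::{finite,field}) \<Rightarrow> 'a"
  shows "rm k r f \<Longrightarrow> r = t * (CARD('a) - 1) + s \<Longrightarrow> s + 2 \<le> CARD('a) \<Longrightarrow> t < k \<Longrightarrow>
    x0 \<in> PP k \<Longrightarrow> f x0 \<noteq> 0 \<Longrightarrow> wt k f = (CARD('a) - s) * CARD('a) ^ (k - t - 1) \<Longrightarrow>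
    \<exists>a v. a \<in> PP k \<and> (\<forall>j. v j \<in> PP k) \<and> indep (k - t) v \<and> {x\<in>PP k. f x \<noteq> 0} \<subseteq> aff a v (k - t)"
proof (induction k arbitrary: r t s f x0)
  case 0
  thus ?case by simp
next
  case (Suc k)
  let ?q = "CARD('a)"
  have q2: "2 \<le> ?q" by (rule card_field_ge2)
  note rmf = Suc.prems(1) and rts = Suc.prems(2) and sq = Suc.prems(3) and tk = Suc.prems(4)
    and wtf = Suc.prems(7)
  show ?case
  proof (cases "t = 0")
    case True
    define v where "v j = (\<lambda>n. if n = j \<and> j < Suc k then (1::'a) else 0)" for j
    have vs: "(\<Sum>l<Suc k. c l * v l j) = (if j < Suc k then c j else 0)" for c j
    proof -
      have "(\<Sum>l<Suc k. c l * v l j) = (\<Sum>l<Suc k. if l = j then c l else 0)"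
        by (rule sum.cong) (auto simp: v_def)
      thus ?thesis by simp
    qed
    have "(\<lambda>_. 0) \<in> PP (Suc k)" by (simp add: PP_def)
    moreover have "\<forall>j. v j \<in> PP (Suc k)" by (auto simp: v_def PP_def)
    moreover have "indep (Suc k) v"
      unfolding indep_def
    proof (intro allI impI)
      fix c :: "nat \<Rightarrow> 'a" and j assume h: "\<forall>i. (\<Sum>j<Suc k. c j * v j i) = 0" and j: "j < Suc k"
      show "c j = 0" using h[rule_format, of j] j unfolding vs by simp
    qed
    moreover have "{x\<in>PP (Suc k). f x \<noteq> 0} \<subseteq> aff (\<lambda>_. 0) v (Suc k)"
    proof
      fix x assume x: "x \<in> {x\<in>PP (Suc k). f x \<noteq> 0}"
      have "x = (\<lambda>i. 0 + (\<Sum>j<Suc k. x j * v j i))"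
      proof
        fix i
        show "x i = 0 + (\<Sum>j<Suc k. x j * v j i)" unfolding vs using x by (auto simp: PP_def)
      qed
      thus "x \<in> aff (\<lambda>_. 0) v (Suc k)" unfolding aff_def by blast
    qed
    ultimately show ?thesis using True by auto
  next
    case False
    let ?S = "{x\<in>PP (Suc k). f x \<noteq> 0}"
    have finS: "finite ?S" by (rule finite_subset[OF _ finite_PP]) auto
    have "2 \<le> card ?S"
    proof -
      have "2 \<le> ?q - s" using sq by simp
      also have "\<dots> \<le> (?q - s) * ?q ^ (Suc k - t - 1)" using q2 by simp
      finally show ?thesis using wtf unfolding wt_def by simp
    qed
    then obtain a b where ab: "a \<in> ?S" "b \<in> ?S" "a \<noteq> b" using two_elems[OF finS] by blast
    define u where "u = (\<lambda>n. b n - a n)"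
    have aP: "a \<in> PP (Suc k)" using ab by simp
    have uP: "u \<in> PP (Suc k)" using ab by (auto simp: u_def PP_def)
    from ab(3) obtain i where "a i \<noteq> b i" by (auto simp: fun_eq_iff)
    hence ui: "u i \<noteq> 0" by (simp add: u_def)
    have iK: "i < Suc k"
    proof (rule ccontr)
      assume "\<not> i < Suc k" thus False using ui uP by (auto simp: PP_def)
    qed
    have kK: "k < Suc k" by simp
    define \<phi> where "\<phi> = (\<lambda>y n. a n + Mop i k u y n)"
    define f' where "f' = (\<lambda>y. f (\<phi> y))"
    have rmf': "rm (Suc k) r f'" unfolding f'_def \<phi>_def
      by (rule rm_comp[OF rmf]) (use rm_Mop[OF _ iK kK] in blast)
    have inj: "inj_on \<phi> (PP (Suc k))" and img: "\<phi> ` PP (Suc k) = PP (Suc k)"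
      using phi_props[OF aP uP iK kK ui] unfolding \<phi>_def by auto
    have wtf': "wt (Suc k) f' = wt (Suc k) f"
    proof -
      have "?S = \<phi> ` {y\<in>PP (Suc k). f' y \<noteq> 0}"
      proof
        show "?S \<subseteq> \<phi> ` {y\<in>PP (Suc k). f' y \<noteq> 0}"
        proof
          fix x assume x: "x \<in> ?S"
          then obtain y where "y \<in> PP (Suc k)" "x = \<phi> y" using img by (metis (no_types, lifting) imageE mem_Collect_eq)
          thus "x \<in> \<phi> ` {y\<in>PP (Suc k). f' y \<noteq> 0}" using x unfolding f'_def by auto
        qed
      next
        show "\<phi> ` {y\<in>PP (Suc k). f' y \<noteq> 0} \<subseteq> ?S" using img unfolding f'_def by auto
      qed
      moreover have "inj_on \<phi> {y\<in>PP (Suc k). f' y \<noteq> 0}" by (rule inj_on_subset[OF inj]) auto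
      ultimately show ?thesis unfolding wt_def by (simp add: card_image)
    qed
    define ek where "ek = (\<lambda>n. if n = k then (1::'a) else 0)"
    have "\<phi> (\<lambda>_. 0) = a" unfolding \<phi>_def by (simp add: Mop_0)
    hence f'0: "f' (\<lambda>_. 0) \<noteq> 0" using ab unfolding f'_def by simp
    have "\<phi> ek = b" unfolding \<phi>_def ek_def Mop_ek by (simp add: u_def)
    hence f'ek: "f' ek \<noteq> 0" using ab unfolding f'_def by simp
    have zP: "(\<lambda>_. 0) \<in> PP (Suc k)" and zP': "(\<lambda>_. 0) \<in> PP k" by (simp_all add: PP_def)
    obtain d g where d: "d < ?q" "d \<le> r" and g: "rm k (r - d) g" and x1: "\<exists>x\<in>PP k. g x \<noteq> 0"
      and fb: "\<forall>x\<in>PP k. g x \<noteq> 0 \<longrightarrow> ?q - d \<le> fib f' k x"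
      using dec_data[OF rmf' zP f'0] by blast
    let ?A = "{x\<in>PP k. g x \<noteq> 0}"
    let ?B = "{x\<in>PP k. g x = 0}"
    have s1: "s < ?q - 1" using sq by simp
    have mweq: "mw ?q (Suc k) r = (?q - s) * ?q ^ (Suc k - t - 1)"
      using mw_ts[OF q2 s1, of "Suc k" t] rts tk by simp
    have c1: "mw ?q (Suc k) r \<le> (?q - d) * mw ?q k (r - d)" by (rule mw_step[OF q2 d])
    have c2: "mw ?q k (r - d) \<le> wt k g" using W[OF g] x1 by blast
    have c2': "(?q - d) * mw ?q k (r - d) \<le> (?q - d) * wt k g" using c2 by simp
    have c3: "(?q - d) * wt k g \<le> (\<Sum>x\<in>?A. fib f' k x)" by (rule chain_bound[OF fb])
    have c4: "wt (Suc k) f' = (\<Sum>x\<in>?A. fib f' k x) + (\<Sum>x\<in>?B. fib f' k x)" by (rule wt_split)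
    have top: "wt (Suc k) f' = mw ?q (Suc k) r" using wtf' wtf mweq by simp
    have B0: "(\<Sum>x\<in>?B. fib f' k x) = 0" using c1 c2' c3 c4 top by linarith
    have Aeq: "(\<Sum>x\<in>?A. fib f' k x) = (?q - d) * wt k g" using c1 c2' c3 c4 top by linarith
    have topg: "(?q - d) * wt k g \<le> (?q - s) * ?q ^ (Suc k - t - 1)" using c1 c2' c3 c4 top mweq by linarith
    have finB: "finite ?B" by (rule finite_subset[OF _ finite_PP]) auto
    have finA: "finite ?A" by (rule finite_subset[OF _ finite_PP]) auto
    have fib0: "\<forall>x\<in>PP k. g x = 0 \<longrightarrow> fib f' k x = 0"
      using B0 finB by (simp add: sum_eq_0_iff)
    have fibA: "fib f' k x = ?q - d" if x: "x \<in> ?A" for x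
    proof (rule ccontr)
      assume ne: "fib f' k x \<noteq> ?q - d"
      have "(\<Sum>x\<in>?A. ?q - d) < (\<Sum>x\<in>?A. fib f' k x)"
      proof (rule sum_strict_mono_ex1[OF finA])
        show "\<forall>x\<in>?A. ?q - d \<le> fib f' k x" using fb by auto
        show "\<exists>x\<in>?A. ?q - d < fib f' k x" using fb x ne by force
      qed
      thus False using Aeq unfolding wt_def by simp
    qed
    have "{0::'a, 1} \<subseteq> {y. f' ((\<lambda>_. 0)(k:=y)) \<noteq> 0}"
    proof -
      have "(\<lambda>_. 0::'a)(k:=0) = (\<lambda>_. 0)" by auto
      moreover have "(\<lambda>_. 0::'a)(k:=1) = ek" by (auto simp: ek_def)
      ultimately show ?thesis using f'0 f'ek by auto
    qed
    hence "card {0::'a, 1} \<le> fib f' k (\<lambda>_. 0)" unfolding fib_def by (intro card_mono) auto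
    hence fz2: "2 \<le> fib f' k (\<lambda>_. 0)" by simp
    have gz: "g (\<lambda>_. 0) \<noteq> 0" using fib0 zP' fz2 by auto
    hence "fib f' k (\<lambda>_. 0) = ?q - d" using fibA zP' by auto
    hence d2: "d + 2 \<le> ?q" using fz2 by simp
    have ds: "d \<le> s"
    proof (rule ccontr)
      assume nds: "\<not> d \<le> s"
      have "r mod (?q - 1) = s" using rts s1 by simp
      hence smd: "r mod (?q - 1) < d" using nds by simp
      have "r < Suc t * (?q - 1)" using rts s1 by simp
      also have "\<dots> \<le> Suc k * (?q - 1)" using tk by (intro mult_le_mono1) simp
      finally have "mw ?q (Suc k) r < (?q - d) * mw ?q k (r - d)"
        by (rule mw_step_strict[OF q2 d2 d(2) smd])
      thus False using c2' c3 c4 top by linarith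
    qed
    have r': "r - d = t * (?q - 1) + (s - d)" using rts ds by simp
    have qd0: "0 < ?q - d" using d by simp
    have "\<exists>a' v'. a' \<in> PP k \<and> (\<forall>j. v' j \<in> PP k) \<and> indep (k - t) v' \<and> ?A \<subseteq> aff a' v' (k - t)"
    proof (cases "t = k")
      case True
      have h1: "?q - s \<le> ?q - d" using ds by simp
      have h2: "(?q - d) * wt k g \<le> ?q - s" using topg True by simp
      have "(?q - d) * wt k g \<le> (?q - d) * 1" using h1 h2 by linarith
      hence "wt k g \<le> 1" using qd0 by simp
      moreover have "wt k g \<noteq> 0" using x1 finA unfolding wt_def by auto
      ultimately have "card ?A = 1" unfolding wt_def by simp
      then obtain p where p: "?A = {p}" by (auto simp: card_1_singleton_iff)
      have "p \<in> PP k" using p by auto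
      moreover have "indep 0 (\<lambda>_ _. 0::'a)" by (simp add: indep_def)
      moreover have "?A \<subseteq> aff p (\<lambda>_ _. 0) 0" using p by (simp add: aff_def)
      ultimately show ?thesis using True by (auto simp: PP_def)
    next
      case False
      hence tk': "t < k" using tk by simp
      have sd1: "s - d < ?q - 1" using s1 by simp
      have lo: "(?q - (s - d)) * ?q ^ (k - t - 1) \<le> wt k g"
        using c2 mw_ts[OF q2 sd1, of k t] r' tk' by simp
      have ee: "k - t = Suc (k - t - 1)" using tk' by simp
      have pw: "?q ^ (Suc k - t - 1) = ?q * ?q ^ (k - t - 1)" using ee by (metis diff_Suc_1 Suc_diff_le less_imp_le_nat tk' power_Suc)
      have "(?q - d) * wt k g \<le> (?q - s) * ?q * ?q ^ (k - t - 1)"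
        using topg pw by (simp add: mult.assoc)
      also have "\<dots> \<le> (?q - d) * (?q - (s - d)) * ?q ^ (k - t - 1)"
        using ar1[OF ds, of ?q] s1 by (intro mult_le_mono1) simp
      finally have "wt k g \<le> (?q - (s - d)) * ?q ^ (k - t - 1)" using qd0
        by (simp add: mult.assoc)
      hence wg: "wt k g = (?q - (s - d)) * ?q ^ (k - t - 1)" using lo by simp
      have "s - d + 2 \<le> ?q" using sq by simp
      from Suc.IH[OF g r' this tk' zP' gz wg] show ?thesis .
    qed
    then obtain a' v' where a'P: "a' \<in> PP k" and v'P: "\<forall>j. v' j \<in> PP k" and ind: "indep (k - t) v'"
      and sub: "?A \<subseteq> aff a' v' (k - t)" by blast
    obtain v'' where v''P: "\<forall>j. v'' j \<in> PP (Suc k)" and ind'': "indep (Suc (k - t)) v''"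
      and sub'': "{x\<in>PP (Suc k). f' x \<noteq> 0} \<subseteq> aff a' v'' (Suc (k - t))"
      using lift_aff[OF a'P v'P ind sub fib0] by blast
    have e: "Suc (k - t) = Suc k - t" using tk by simp
    have a'P2: "a' \<in> PP (Suc k)" using a'P by (rule PP_mono)
    show ?thesis
      by (rule transfer_phi[OF aP uP iK kK ui a'P2 v''P ind''[unfolded e]])
         (use sub'' e in \<open>simp add: f'_def \<phi>_def\<close>)
  qed
qed

theorem mainTheorem2:
  fixes f :: "('m::finite \<Rightarrow> 'a::{finite,field}) \<Rightarrow> 'a"
    and p n t s r :: nat
  assumes "prime p" and "CARD('a) = p ^ n"
    and "s \<le> CARD('a) - 2"
    and "r = t * (CARD('a) - 1) + s"
    and "r < CARD('m) * (CARD('a) - 1)"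
    and "f \<in> RM r" and "f \<noteq> (\<lambda>_. 0)"
    and "weight f = (CARD('a) - s) * CARD('a) ^ (CARD('m) - t - 1)"
  shows "\<exists>A. affine_subspace_codim t A \<and> support f \<subseteq> A"
proof -
  let ?q = "CARD('a)"
  let ?m = "CARD('m)"
  have q2: "2 \<le> ?q" by (rule card_field_ge2)
  obtain \<iota> :: "'m \<Rightarrow> nat" where bij: "bij_betw \<iota> UNIV {0..<?m}"
    using ex_bij_betw_finite_nat[of "UNIV :: 'm set"] by auto
  define h where "h = inv_into UNIV \<iota>"
  have \<iota>lt: "\<iota> i < ?m" for i using bij by (auto simp: bij_betw_def)
  have inj\<iota>: "inj \<iota>" using bij by (auto simp: bij_betw_def)
  have h\<iota>: "h (\<iota> i) = i" for i unfolding h_def using inj\<iota> by simp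
  have \<iota>h: "n < ?m \<Longrightarrow> \<iota> (h n) = n" for n unfolding h_def
    using bij_betw_inv_into_right[OF bij, of n] by simp
  define F where "F y = f (\<lambda>i. y (\<iota> i))" for y :: "nat \<Rightarrow> 'a"
  define ext where "ext x = (\<lambda>n. if n < ?m then x (h n) else 0)" for x :: "'m \<Rightarrow> 'a"
  have extP: "ext x \<in> PP ?m" for x by (simp add: ext_def PP_def)
  have ext\<iota>: "(\<lambda>i. ext x (\<iota> i)) = x" for x by (simp add: ext_def \<iota>lt h\<iota>)
  have Fext: "F (ext x) = f x" for x by (simp add: F_def ext\<iota>)
  obtain c where c: "\<forall>x. f x = (\<Sum>e\<in>reduced_exps ?q r. c e * (\<Prod>i\<in>UNIV. x i ^ e i))"
    using assms(6) unfolding RM_def by blast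
  have rmF: "rm ?m r F"
  proof -
    have "rm ?m r (\<lambda>y. \<Sum>e\<in>reduced_exps ?q r. c e * (\<Prod>i\<in>UNIV. y (\<iota> i) ^ e i))"
    proof (rule rm_sum, intro ballI)
      fix e :: "'m \<Rightarrow> nat" assume e: "e \<in> reduced_exps ?q r"
      have "rm ?m (\<Sum>i\<in>UNIV. e i) (\<lambda>y. \<Prod>i\<in>UNIV. y (\<iota> i) ^ e i)"
        by (rule rm_prod) (auto intro: rm_pow \<iota>lt)
      moreover have "(\<Sum>i\<in>UNIV. e i) \<le> r" using e unfolding reduced_exps_def by simp
      ultimately show "rm ?m r (\<lambda>y. c e * (\<Prod>i\<in>UNIV. y (\<iota> i) ^ e i))"
        using rm_mul[OF rm_const[of ?m 0 "c e"], of "\<Sum>i\<in>UNIV. e i" _ r] by simp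
    qed
    thus ?thesis unfolding F_def using c by simp
  qed
  obtain x0 where x0: "f x0 \<noteq> 0" using assms(7) by auto
  have wtF: "wt ?m F = weight f"
  proof -
    have "{y \<in> PP ?m. F y \<noteq> 0} = ext ` support f"
    proof
      show "ext ` support f \<subseteq> {y \<in> PP ?m. F y \<noteq> 0}"
        using extP Fext by (auto simp: support_def)
    next
      show "{y \<in> PP ?m. F y \<noteq> 0} \<subseteq> ext ` support f"
      proof
        fix y assume y: "y \<in> {y \<in> PP ?m. F y \<noteq> 0}"
        have "y = ext (\<lambda>i. y (\<iota> i))"
        proof
          fix n show "y n = ext (\<lambda>i. y (\<iota> i)) n"
            using y \<iota>h by (auto simp: ext_def PP_def)
        qed
        moreover have "(\<lambda>i. y (\<iota> i)) \<in> support f" using y by (simp add: F_def support_def)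
        ultimately show "y \<in> ext ` support f" by blast
      qed
    qed
    moreover have "inj_on ext (support f)"
    proof (rule inj_onI)
      fix x x' assume "ext x = ext x'"
      hence "(\<lambda>i. ext x (\<iota> i)) = (\<lambda>i. ext x' (\<iota> i))" by simp
      thus "x = x'" unfolding ext\<iota> .
    qed
    ultimately show ?thesis unfolding wt_def weight_def by (simp add: card_image)
  qed
  have tm: "t < ?m"
  proof (rule ccontr)
    assume "\<not> t < ?m"
    hence "?m \<le> t" by simp
    hence "?m * (?q - 1) \<le> t * (?q - 1)" by (rule mult_le_mono1)
    thus False using assms(4,5) by linarith
  qed
  have s2: "s + 2 \<le> ?q" using assms(3) q2 by simp
  obtain a v where aP: "a \<in> PP ?m" and vP: "\<forall>j. v j \<in> PP ?m" and ind: "indep (?m - t) v"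
    and sub: "{x\<in>PP ?m. F x \<noteq> 0} \<subseteq> aff a v (?m - t)"
    using T[OF rmF assms(4) s2 tm extP[of x0], unfolded Fext, OF x0] wtF assms(8) by auto
  define A where "A = {x. \<exists>c :: nat \<Rightarrow> 'a. x = (\<lambda>i. a (\<iota> i) + (\<Sum>j<?m - t. c j * v j (\<iota> i)))}"
  have i1: "\<forall>c :: nat \<Rightarrow> 'a. (\<forall>i. (\<Sum>j<?m - t. c j * v j (\<iota> i)) = 0) \<longrightarrow> (\<forall>j<?m - t. c j = 0)"
  proof (rule allI, rule impI)
    fix c :: "nat \<Rightarrow> 'a" assume h0: "\<forall>i. (\<Sum>j<?m - t. c j * v j (\<iota> i)) = 0"
    have "(\<Sum>j<?m - t. c j * v j n) = 0" for n
    proof (cases "n < ?m")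
      case True thus ?thesis using h0[rule_format, of "h n"] \<iota>h by simp
    next
      case False thus ?thesis using vP by (simp add: PP_def)
    qed
    thus "\<forall>j<?m - t. c j = 0" using ind unfolding indep_def by blast
  qed
  have "affine_subspace_codim t A"
    unfolding affine_subspace_codim_def
    apply (rule conjI)
    using tm apply simp
    apply (rule exI[of _ "\<lambda>i. a (\<iota> i)"], rule exI[of _ "\<lambda>j i. v j (\<iota> i)"])
    using i1 A_def by simp
  moreover have "support f \<subseteq> A"
  proof
    fix x assume x: "x \<in> support f"
    hence "ext x \<in> {x\<in>PP ?m. F x \<noteq> 0}" using extP Fext by (simp add: support_def)
    hence "ext x \<in> aff a v (?m - t)" using sub by blast
    then obtain c where c: "ext x = (\<lambda>i. a i + (\<Sum>j<?m - t. c j * v j i))" unfolding aff_def by blast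
    have "x = (\<lambda>i. ext x (\<iota> i))" by (simp add: ext\<iota>)
    also have "\<dots> = (\<lambda>i. a (\<iota> i) + (\<Sum>j<?m - t. c j * v j (\<iota> i)))" by (simp add: c)
    finally show "x \<in> A" unfolding A_def by blast
  qed
  ultimately show ?thesis by blast
qed

end
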